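(* (a) Let $\Box=(n^m)$. Then \[\sum_{(\mu,\nu)}f_\mu\, f_{\Box\setminus\nu}=(n-1)f_\Box,\] where the sum runs over all pairs of partitions $\mu,\nu$ with $[\mu]\subseteq[\nu]\subseteq[\Box]$ and $[\nu]=[\mu]\cup\{u,(i,j+1)\}$ for some cell $u=(i,j)\in[\Box]\setminus[\mu]$. (b) Let $n\ge2$. Then \[\sum_{(\mu,\nu)}g^\mu\, g^{\Delta_n\setminus\nu}=(n-2)\,g^{\Delta_n},\] where the sum runs over all pairs of strict partitions $\mu,\nu$ with $[\mu]^{\mathrm{sh}}\subseteq[\nu]^{\mathrm{sh}}\subseteq[\Delta_n]^{\mathrm{sh}}$ and $[\nu]^{\mathrm{sh}}=[\mu]^{\mathrm{sh}}\cup\{u,(i,j+1)\}$ for some cell $u=(i,j)\in[\Delta_n]^{\mathrm{sh}}\setminus[\mu]^{\mathrm{sh}}$.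
   Context: Matrix coordinates. $[\lambda]=\{(i,j):i\in[\ell(\lambda)],j\in[\lambda_i]\}$; for strict $\lambda$, $[\lambda]^{\mathrm{sh}}=\{(i,j+i-1):i\in[\ell(\lambda)],j\in[\lambda_i]\}$. $f_\lambda$ is the number of standard Young tableaux of shape $\lambda$ and $g^\lambda$ the number of shifted standard Young tableaux of shape $[\lambda]^{\mathrm{sh}}$ (bijections onto $[|\lambda|]$ increasing along rows and columns); $f_\emptyset=g^\emptyset=1$. For $\Box=(n^m)$ and $[\nu]\subseteq[\Box]$, $\Box\setminus\nu$ is the partition with diagram $\{(m-i+1,n-j+1):(i,j)\in[\Box]\setminus[\nu]\}$. $\Delta_n=(n-1,\dots,1)$, and for strict $\nu$ with $[\nu]^{\mathrm{sh}}\subseteq[\Delta_n]^{\mathrm{sh}}$, $\Delta_n\setminus\nu$ is the strict partition with shifted diagram $\{(n-j,n-i):(i,j)\in[\Delta_n]^{\mathrm{sh}}\setminus[\nu]^{\mathrm{sh}}\}$. *)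

theory Defs
  imports Main
begin

text \<open>Partitions are lists of positive integers in weakly decreasing order;
  strict partitions are strictly decreasing.  Cells use 1-based matrix coordinates.\<close>

definition is_partition :: "nat list \<Rightarrow> bool" where
  "is_partition la \<longleftrightarrow> sorted_wrt (\<ge>) la \<and> (\<forall>x\<in>set la. 0 < x)"

definition is_strict_partition :: "nat list \<Rightarrow> bool" where
  "is_strict_partition la \<longleftrightarrow> sorted_wrt (>) la \<and> (\<forall>x\<in>set la. 0 < x)"

definition size_part :: "nat list \<Rightarrow> nat" where
  "size_part la = sum_list la"

definition diagram :: "nat list \<Rightarrow> (nat \<times> nat) set" where
  "diagram la = {(i, j). 1 \<le> i \<and> i \<le> length la \<and> 1 \<le> j \<and> j \<le> la ! (i - 1)}"

definition shifted_diagram :: "nat list \<Rightarrow> (nat \<times> nat) set" where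
  "shifted_diagram la = {(i, j + i - 1) | i j. 1 \<le> i \<and> i \<le> length la \<and> 1 \<le> j \<and> j \<le> la ! (i - 1)}"

text \<open>Number of standard fillings of a finite cell set D: bijections onto {1..|D|}
  increasing along rows and columns (the values off D are fixed to 0 so that
  distinct fillings correspond to distinct functions).\<close>
definition num_std :: "(nat \<times> nat) set \<Rightarrow> nat" where
  "num_std D = card {T :: nat \<times> nat \<Rightarrow> nat.
      bij_betw T D {1..card D} \<and> (\<forall>x. x \<notin> D \<longrightarrow> T x = 0) \<and>
      (\<forall>i j j'. (i, j) \<in> D \<and> (i, j') \<in> D \<and> j < j' \<longrightarrow> T (i, j) < T (i, j')) \<and>
      (\<forall>i i' j. (i, j) \<in> D \<and> (i', j) \<in> D \<and> i < i' \<longrightarrow> T (i, j) < T (i', j))}"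

definition f_syt :: "nat list \<Rightarrow> nat" where
  "f_syt la = num_std (diagram la)"

definition g_syt :: "nat list \<Rightarrow> nat" where
  "g_syt la = num_std (shifted_diagram la)"

definition rect :: "nat \<Rightarrow> nat \<Rightarrow> nat list" where
  "rect m n = replicate m n"

definition staircase :: "nat \<Rightarrow> nat list" where
  "staircase n = rev [1..<n]"

definition rect_compl :: "nat \<Rightarrow> nat \<Rightarrow> nat list \<Rightarrow> nat list" where
  "rect_compl m n nu = (THE la. is_partition la \<and>
      diagram la = (\<lambda>(i, j). (m - i + 1, n - j + 1)) ` (diagram (rect m n) - diagram nu))"

definition stair_compl :: "nat \<Rightarrow> nat list \<Rightarrow> nat list" where
  "stair_compl n nu = (THE la. is_strict_partition la \<and>
      shifted_diagram la = (\<lambda>(i, j). (n - j, n - i)) ` (shifted_diagram (staircase n) - shifted_diagram nu))"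

definition pairs_rect :: "nat \<Rightarrow> nat \<Rightarrow> (nat list \<times> nat list) set" where
  "pairs_rect m n = {(mu, nu). is_partition mu \<and> is_partition nu \<and>
      diagram mu \<subseteq> diagram nu \<and> diagram nu \<subseteq> diagram (rect m n) \<and>
      (\<exists>i j. (i, j) \<in> diagram (rect m n) - diagram mu \<and>
             diagram nu = diagram mu \<union> {(i, j), (i, j + 1)})}"

definition pairs_stair :: "nat \<Rightarrow> (nat list \<times> nat list) set" where
  "pairs_stair n = {(mu, nu). is_strict_partition mu \<and> is_strict_partition nu \<and>
      shifted_diagram mu \<subseteq> shifted_diagram nu \<and>
      shifted_diagram nu \<subseteq> shifted_diagram (staircase n) \<and>
      (\<exists>i j. (i, j) \<in> shifted_diagram (staircase n) - shifted_diagram mu \<and>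
             shifted_diagram nu = shifted_diagram mu \<union> {(i, j), (i, j + 1)})}"

end

theory Submission
  imports Defs
begin


definition prec :: "nat \<times> nat \<Rightarrow> nat \<times> nat \<Rightarrow> bool" where
  "prec x y \<longleftrightarrow> (fst x = fst y \<and> snd x < snd y) \<or> (snd x = snd y \<and> fst x < fst y)"

definition stdT :: "(nat \<times> nat) set \<Rightarrow> (nat \<times> nat \<Rightarrow> nat) set" where
  "stdT D = {T. inj_on T D \<and> T ` D \<subseteq> {1..card D} \<and> (\<forall>x. x \<notin> D \<longrightarrow> T x = 0) \<and>
     (\<forall>x\<in>D. \<forall>y\<in>D. prec x y \<longrightarrow> T x < T y)}"

lemma num_std_eq:
  assumes "finite D" shows "num_std D = card (stdT D)"
proof -
  have "{T :: nat \<times> nat \<Rightarrow> nat.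
      bij_betw T D {1..card D} \<and> (\<forall>x. x \<notin> D \<longrightarrow> T x = 0) \<and>
      (\<forall>i j j'. (i, j) \<in> D \<and> (i, j') \<in> D \<and> j < j' \<longrightarrow> T (i, j) < T (i, j')) \<and>
      (\<forall>i i' j. (i, j) \<in> D \<and> (i', j) \<in> D \<and> i < i' \<longrightarrow> T (i, j) < T (i', j))} = stdT D"
  proof (intro set_eqI iffI)
    fix T assume "T \<in> stdT D"
    then have i: "inj_on T D" "T ` D \<subseteq> {1..card D}" "\<forall>x. x \<notin> D \<longrightarrow> T x = 0"
      "\<forall>x\<in>D. \<forall>y\<in>D. prec x y \<longrightarrow> T x < T y" by (auto simp: stdT_def)
    have "T ` D = {1..card D}"
      using i(1,2) assms by (intro card_subset_eq) (auto simp: card_image)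
    then have "bij_betw T D {1..card D}" using i(1) by (simp add: bij_betw_def)
    then show "T \<in> {T :: nat \<times> nat \<Rightarrow> nat.
      bij_betw T D {1..card D} \<and> (\<forall>x. x \<notin> D \<longrightarrow> T x = 0) \<and>
      (\<forall>i j j'. (i, j) \<in> D \<and> (i, j') \<in> D \<and> j < j' \<longrightarrow> T (i, j) < T (i, j')) \<and>
      (\<forall>i i' j. (i, j) \<in> D \<and> (i', j) \<in> D \<and> i < i' \<longrightarrow> T (i, j) < T (i', j))}"
      using i(3,4) by (auto simp: prec_def)
  next
    fix T assume "T \<in> {T :: nat \<times> nat \<Rightarrow> nat.
      bij_betw T D {1..card D} \<and> (\<forall>x. x \<notin> D \<longrightarrow> T x = 0) \<and>
      (\<forall>i j j'. (i, j) \<in> D \<and> (i, j') \<in> D \<and> j < j' \<longrightarrow> T (i, j) < T (i, j')) \<and>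
      (\<forall>i i' j. (i, j) \<in> D \<and> (i', j) \<in> D \<and> i < i' \<longrightarrow> T (i, j) < T (i', j))}"
    then have h: "inj_on T D" "T ` D = {1..card D}" "\<forall>x. x \<notin> D \<longrightarrow> T x = 0"
      "\<And>i j j'. (i, j) \<in> D \<Longrightarrow> (i, j') \<in> D \<Longrightarrow> j < j' \<Longrightarrow> T (i, j) < T (i, j')"
      "\<And>i i' j. (i, j) \<in> D \<Longrightarrow> (i', j) \<in> D \<Longrightarrow> i < i' \<Longrightarrow> T (i, j) < T (i', j)"
      by (auto simp: bij_betw_def)
    have "\<forall>x\<in>D. \<forall>y\<in>D. prec x y \<longrightarrow> T x < T y"
    proof (intro ballI impI)
      fix x y assume "x \<in> D" "y \<in> D" "prec x y"
      then show "T x < T y" using h(4)[of "fst x" "snd x" "snd y"] h(5)[of "fst x" "snd x" "fst y"]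
        by (cases x, cases y) (auto simp: prec_def)
    qed
    then show "T \<in> stdT D" using h(1,2,3) by (simp add: stdT_def)
  qed
  then show ?thesis by (simp add: num_std_def)
qed

lemma finite_stdT: assumes "finite D" shows "finite (stdT D)"
proof -
  have "stdT D \<subseteq> {f. \<forall>x. (x \<in> D \<longrightarrow> f x \<in> {1..card D}) \<and> (x \<notin> D \<longrightarrow> f x = 0)}"
    by (auto simp: stdT_def)
  then show ?thesis using finite_set_of_finite_funs[of D "{1..card D}" 0] assms
    by (meson finite_atLeastAtMost finite_subset)
qed

lemma stdT_image: assumes "finite D" "T \<in> stdT D" shows "T ` D = {1..card D}"
  using assms by (intro card_subset_eq) (auto simp: card_image stdT_def)

definition cellof :: "(nat \<times> nat) set \<Rightarrow> (nat \<times> nat \<Rightarrow> nat) \<Rightarrow> nat \<Rightarrow> nat \<times> nat" where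
  "cellof D T v = inv_into D T v"

lemma cellof:
  assumes "finite D" "T \<in> stdT D" "1 \<le> v" "v \<le> card D"
  shows "cellof D T v \<in> D" "T (cellof D T v) = v"
proof -
  have "v \<in> T ` D" using stdT_image[OF assms(1,2)] assms(3,4) by auto
  then show "cellof D T v \<in> D" "T (cellof D T v) = v"
    by (auto simp: cellof_def inv_into_into f_inv_into_f)
qed

lemma cellof_eq:
  assumes "T \<in> stdT D" "x \<in> D" shows "cellof D T (T x) = x"
  using assms by (auto simp: cellof_def stdT_def inv_into_f_f)

lemma stdT_mono: "T \<in> stdT D \<Longrightarrow> x \<in> D \<Longrightarrow> y \<in> D \<Longrightarrow> prec x y \<Longrightarrow> T x < T y"
  by (auto simp: stdT_def)

lemma stdT_range: "T \<in> stdT D \<Longrightarrow> x \<in> D \<Longrightarrow> 1 \<le> T x \<and> T x \<le> card D"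
  by (auto simp: stdT_def)

lemma stdT_out: "T \<in> stdT D \<Longrightarrow> x \<notin> D \<Longrightarrow> T x = 0"
  unfolding stdT_def by blast

lemma stdT_inj: "T \<in> stdT D \<Longrightarrow> x \<in> D \<Longrightarrow> y \<in> D \<Longrightarrow> T x = T y \<Longrightarrow> x = y"
  by (auto simp: stdT_def inj_on_def)


definition Hset :: "(nat \<times> nat) set \<Rightarrow> ((nat \<times> nat \<Rightarrow> nat) \<times> nat) set" where
  "Hset D = {(T, a). T \<in> stdT D \<and> 1 \<le> a \<and> a < card D \<and>
     cellof D T (Suc a) = (fst (cellof D T a), Suc (snd (cellof D T a)))}"

definition Vset :: "(nat \<times> nat) set \<Rightarrow> ((nat \<times> nat \<Rightarrow> nat) \<times> nat) set" where
  "Vset D = {(T, a). T \<in> stdT D \<and> 1 \<le> a \<and> a < card D \<and>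
     cellof D T (Suc a) = (Suc (fst (cellof D T a)), snd (cellof D T a))}"

definition sw :: "nat \<Rightarrow> (nat \<times> nat \<Rightarrow> nat) \<Rightarrow> (nat \<times> nat \<Rightarrow> nat)" where
  "sw a T = (\<lambda>x. if T x = a then Suc a else if T x = Suc a then a else T x)"

lemma sw_sw: "sw a (sw a T) = T"
  by (auto simp: sw_def fun_eq_iff)

locale convex_shape =
  fixes D :: "(nat \<times> nat) set"
  assumes fin: "finite D"
    and rowc: "\<And>i j j' j''. (i, j) \<in> D \<Longrightarrow> (i, j') \<in> D \<Longrightarrow> j \<le> j'' \<Longrightarrow> j'' \<le> j' \<Longrightarrow> (i, j'') \<in> D"
    and colc: "\<And>i i' i'' j. (i, j) \<in> D \<Longrightarrow> (i', j) \<in> D \<Longrightarrow> i \<le> i'' \<Longrightarrow> i'' \<le> i' \<Longrightarrow> (i'', j) \<in> D"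
begin

lemma sw_std:
  assumes T: "T \<in> stdT D" and a: "1 \<le> a" "a < card D"
    and nH: "(T, a) \<notin> Hset D" and nV: "(T, a) \<notin> Vset D"
  shows "sw a T \<in> stdT D"
proof -
  define xa where "xa = cellof D T a"
  define xb where "xb = cellof D T (Suc a)"
  have xa: "xa \<in> D" "T xa = a" using cellof[OF fin T, of a] a by (auto simp: xa_def)
  have xb: "xb \<in> D" "T xb = Suc a" using cellof[OF fin T, of "Suc a"] a by (auto simp: xb_def)
  have nH': "xb \<noteq> (fst xa, Suc (snd xa))" using nH T a by (auto simp: Hset_def xa_def xb_def)
  have nV': "xb \<noteq> (Suc (fst xa), snd xa)" using nV T a by (auto simp: Vset_def xa_def xb_def)
  have key: "\<not> prec xa xb"
  proof
    assume p: "prec xa xb"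
    show False
    proof (cases "fst xa = fst xb")
      case True
      with p have lt: "snd xa < snd xb" by (auto simp: prec_def)
      have ne: "snd xb \<noteq> Suc (snd xa)" using nH' True by (cases xb) auto
      define z where "z = (fst xa, Suc (snd xa))"
      have "z \<in> D" unfolding z_def
        using rowc[of "fst xa" "snd xa" "snd xb" "Suc (snd xa)"] xa xb True lt
        by (cases xa, cases xb) auto
      moreover have "prec xa z" "prec z xb" using True lt ne by (auto simp: prec_def z_def)
      ultimately have "T xa < T z" "T z < T xb" using stdT_mono[OF T] xa xb by blast+
      then show False using xa xb by simp
    next
      case False
      with p have eq: "snd xa = snd xb" and lt: "fst xa < fst xb" by (auto simp: prec_def)
      have ne: "fst xb \<noteq> Suc (fst xa)" using nV' eq by (cases xb) auto
      define z where "z = (Suc (fst xa), snd xa)"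
      have "z \<in> D" unfolding z_def
        using colc[of "fst xa" "snd xa" "fst xb" "Suc (fst xa)"] xa xb eq lt
        by (cases xa, cases xb) auto
      moreover have "prec xa z" "prec z xb" using eq lt ne by (auto simp: prec_def z_def)
      ultimately have "T xa < T z" "T z < T xb" using stdT_mono[OF T] xa xb by blast+
      then show False using xa xb by simp
    qed
  qed
  have inj: "inj_on (sw a T) D"
    using T unfolding inj_on_def sw_def stdT_def by (auto split: if_splits)
  have rng: "sw a T ` D \<subseteq> {1..card D}"
    using T a unfolding sw_def stdT_def by (auto split: if_splits)
  have out: "\<forall>x. x \<notin> D \<longrightarrow> sw a T x = 0"
    using T a unfolding sw_def stdT_def by auto
  have mono: "\<forall>x\<in>D. \<forall>y\<in>D. prec x y \<longrightarrow> sw a T x < sw a T y"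
  proof (intro ballI impI)
    fix x y assume x: "x \<in> D" and y: "y \<in> D" and p: "prec x y"
    have lt: "T x < T y" using stdT_mono[OF T x y p] .
    have "\<not> (T x = a \<and> T y = Suc a)"
    proof
      assume "T x = a \<and> T y = Suc a"
      then have "x = xa" "y = xb" using stdT_inj[OF T] x y xa xb by auto
      with key p show False by simp
    qed
    with lt show "sw a T x < sw a T y" unfolding sw_def by auto
  qed
  show ?thesis using inj rng out mono by (simp add: stdT_def)
qed

lemma cellof_sw:
  assumes T: "T \<in> stdT D" and a: "1 \<le> a" "a < card D" and S: "sw a T \<in> stdT D"
  shows "cellof D (sw a T) a = cellof D T (Suc a)" "cellof D (sw a T) (Suc a) = cellof D T a"
proof -
  have xa: "cellof D T a \<in> D" "T (cellof D T a) = a" using cellof[OF fin T, of a] a by auto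
  have xb: "cellof D T (Suc a) \<in> D" "T (cellof D T (Suc a)) = Suc a"
    using cellof[OF fin T, of "Suc a"] a by auto
  have "sw a T (cellof D T (Suc a)) = a" using xb by (simp add: sw_def)
  then show "cellof D (sw a T) a = cellof D T (Suc a)" using cellof_eq[OF S xb(1)] by simp
  have "sw a T (cellof D T a) = Suc a" using xa by (simp add: sw_def)
  then show "cellof D (sw a T) (Suc a) = cellof D T a" using cellof_eq[OF S xa(1)] by simp
qed

theorem partA:
  assumes ne: "D \<noteq> {}"
  shows "int (card (Hset D)) =
    (\<Sum>T\<in>stdT D. int (snd (cellof D T (card D))) - int (snd (cellof D T 1)))"
proof -
  define N where "N = card D"
  have N1: "1 \<le> N" using ne fin N_def by (simp add: Suc_le_eq card_gt_0_iff)
  define c where "c T a = int (snd (cellof D T a))" for T a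
  define d where "d p = c (fst p) (Suc (snd p)) - c (fst p) (snd p)" for p
  define P where "P = stdT D \<times> {1..<N}"
  define Oth where "Oth = P - Hset D - Vset D"
  have finP: "finite P" using finite_stdT[OF fin] by (simp add: P_def)
  have HP: "Hset D \<subseteq> P" by (auto simp: Hset_def P_def N_def)
  have VP: "Vset D \<subseteq> P" by (auto simp: Vset_def P_def N_def)
  have HV: "Hset D \<inter> Vset D = {}" by (auto simp: Hset_def Vset_def)
  have "(\<Sum>T\<in>stdT D. c T N - c T 1) = (\<Sum>T\<in>stdT D. \<Sum>a\<in>{1..<N}. d (T, a))"
  proof (rule sum.cong)
    fix T
    have "{1..<N} = {1..N-1}" using N1 by auto
    then have "(\<Sum>a\<in>{1..<N}. d (T, a)) = (\<Sum>a=1..N-1. c T (Suc a) - c T a)" by (simp add: d_def)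
    also have "\<dots> = c T (Suc (N-1)) - c T 1" by (rule sum_Suc_diff) simp
    finally show "c T N - c T 1 = (\<Sum>a\<in>{1..<N}. d (T, a))" using N1 by simp
  qed simp
  also have "\<dots> = sum d P" unfolding P_def by (subst sum.cartesian_product) (simp add: case_prod_beta')
  also have "\<dots> = sum d (Hset D) + sum d (Vset D) + sum d Oth"
  proof -
    have "P = Hset D \<union> Vset D \<union> Oth" using HP VP by (auto simp: Oth_def)
    moreover have "finite (Hset D)" "finite (Vset D)" "finite Oth"
      using finP HP VP by (auto simp: Oth_def intro: finite_subset)
    moreover have "(Hset D \<union> Vset D) \<inter> Oth = {}" by (auto simp: Oth_def)
    ultimately have "sum d P = sum d (Hset D \<union> Vset D) + sum d Oth"
      by (simp add: sum.union_disjoint)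
    then show ?thesis using HV \<open>finite (Hset D)\<close> \<open>finite (Vset D)\<close>
      by (simp add: sum.union_disjoint)
  qed
  also have "sum d (Hset D) = int (card (Hset D))"
  proof -
    have "sum d (Hset D) = sum (\<lambda>_. 1) (Hset D)"
      by (rule sum.cong) (auto simp: Hset_def d_def c_def)
    then show ?thesis by simp
  qed
  also have "sum d (Vset D) = 0"
    by (rule sum.neutral) (auto simp: Vset_def d_def c_def)
  also have "sum d Oth = 0"
  proof -
    define s where "s p = (sw (snd p) (fst p), snd p)" for p
    have sO: "s p \<in> Oth" and ds: "d (s p) = - d p" and ss: "s (s p) = p" if "p \<in> Oth" for p
    proof -
      obtain T a where p: "p = (T, a)" by (cases p)
      have T: "T \<in> stdT D" and a: "1 \<le> a" "a < card D" and nH: "(T, a) \<notin> Hset D"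
        and nV: "(T, a) \<notin> Vset D" using that by (auto simp: Oth_def P_def p N_def)
      have S: "sw a T \<in> stdT D" by (rule sw_std[OF T a nH nV])
      note cs = cellof_sw[OF T a S]
      have xa: "T (cellof D T a) = a" using cellof[OF fin T, of a] a by auto
      have xb: "T (cellof D T (Suc a)) = Suc a" "cellof D T (Suc a) \<in> D" "cellof D T a \<in> D"
        using cellof[OF fin T, of "Suc a"] cellof[OF fin T, of a] a by auto
      have nH2: "(sw a T, a) \<notin> Hset D"
      proof
        assume "(sw a T, a) \<in> Hset D"
        then have "cellof D T a = (fst (cellof D T (Suc a)), Suc (snd (cellof D T (Suc a))))"
          using cs by (simp add: Hset_def)
        then have "prec (cellof D T (Suc a)) (cellof D T a)" by (simp add: prec_def)
        then show False using stdT_mono[OF T xb(2,3)] xa xb by simp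
      qed
      have nV2: "(sw a T, a) \<notin> Vset D"
      proof
        assume "(sw a T, a) \<in> Vset D"
        then have "cellof D T a = (Suc (fst (cellof D T (Suc a))), snd (cellof D T (Suc a)))"
          using cs by (simp add: Vset_def)
        then have "prec (cellof D T (Suc a)) (cellof D T a)" by (simp add: prec_def)
        then show False using stdT_mono[OF T xb(2,3)] xa xb by simp
      qed
      show "s p \<in> Oth" using S a nH2 nV2 by (simp add: s_def p Oth_def P_def N_def)
      show "d (s p) = - d p" using cs by (simp add: s_def p d_def c_def)
      show "s (s p) = p" by (simp add: s_def p sw_sw)
    qed
    have bij: "bij_betw s Oth Oth"
      by (rule bij_betw_byWitness[where f'=s]) (use sO ss in auto)
    have "sum d Oth = sum (d \<circ> s) Oth" using sum.reindex_bij_betw[OF bij, of d] by simp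
    also have "\<dots> = - sum d Oth" using ds by (simp add: sum_negf)
    finally show ?thesis by simp
  qed
  finally show ?thesis by (simp add: c_def N_def)
qed

end


lemma prec_asym: "prec x y \<Longrightarrow> \<not> prec y x"
  by (auto simp: prec_def)

lemma memlev: "S = {x \<in> D. P x} \<Longrightarrow> x \<in> D \<Longrightarrow> x \<in> S \<longleftrightarrow> P x"
  by auto

locale split_setup =
  fixes D A B C :: "(nat \<times> nat) set" and u u' :: "nat \<times> nat" and \<rho> :: "nat \<times> nat \<Rightarrow> nat \<times> nat"
  assumes finD: "finite D" and AB: "A \<subseteq> B" and BD: "B \<subseteq> D"
    and BA: "B - A = {u, u'}" and uu: "u \<noteq> u'" and puu: "prec u u'"
    and Acl: "\<And>x y. x \<in> A \<Longrightarrow> y \<in> D \<Longrightarrow> prec y x \<Longrightarrow> y \<in> A"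
    and Bcl: "\<And>x y. x \<in> B \<Longrightarrow> y \<in> D \<Longrightarrow> prec y x \<Longrightarrow> y \<in> B"
    and rinj: "inj_on \<rho> (D - B)" and rim: "\<rho> ` (D - B) = C"
    and rrev: "\<And>x y. x \<in> D - B \<Longrightarrow> y \<in> D - B \<Longrightarrow> prec x y \<longleftrightarrow> prec (\<rho> y) (\<rho> x)"
begin

definition k where "k = card A"
definition N where "N = card D"

definition Xset where
  "Xset = {T \<in> stdT D. {x \<in> D. T x \<le> k} = A \<and> {x \<in> D. T x \<le> Suc (Suc k)} = B}"

definition F where
  "F p = (\<lambda>x. if x \<in> A then fst p x else if x = u then Suc k else if x = u' then Suc (Suc k)
      else if x \<in> D then Suc N - snd p (\<rho> x) else 0)"

definition G where
  "G T = ((\<lambda>x. if x \<in> A then T x else 0),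
          (\<lambda>y. if y \<in> C then Suc N - T (inv_into (D - B) \<rho> y) else 0))"

lemma finA: "finite A" using finD AB BD by (meson finite_subset subset_trans)
lemma finB: "finite B" using finD BD by (rule finite_subset[rotated])
lemma uA: "u \<in> B" "u \<notin> A" "u' \<in> B" "u' \<notin> A" using BA by auto
lemma cardB: "card B = Suc (Suc k)"
proof -
  have "B = A \<union> {u, u'}" using BA AB by auto
  then show ?thesis using finA uA uu by (simp add: k_def card_insert_if)
qed
lemma cardC: "card C = N - Suc (Suc k)"
proof -
  have "card C = card (D - B)" using card_image[OF rinj] rim by simp
  also have "\<dots> = N - Suc (Suc k)" using finB BD cardB by (simp add: card_Diff_subset N_def)
  finally show ?thesis .
qed
lemma kN: "Suc (Suc k) \<le> N" using card_mono[OF finD BD] cardB by (simp add: N_def)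

lemma rinv: "y \<in> C \<Longrightarrow> inv_into (D - B) \<rho> y \<in> D - B \<and> \<rho> (inv_into (D - B) \<rho> y) = y"
proof -
  assume "y \<in> C"
  then have "y \<in> \<rho> ` (D - B)" using rim by simp
  then show ?thesis using inv_into_into[of y \<rho> "D - B"] f_inv_into_f[of y \<rho> "D - B"] by blast
qed

lemma F_in:
  assumes S1: "S1 \<in> stdT A" and S2: "S2 \<in> stdT C"
  shows "F (S1, S2) \<in> Xset"
proof -
  let ?T = "F (S1, S2)"
  have v1: "x \<in> A \<Longrightarrow> 1 \<le> ?T x \<and> ?T x \<le> k" for x
    using stdT_range[OF S1, of x] by (simp add: F_def k_def)
  have v2: "x \<in> D - B \<Longrightarrow> Suc (Suc (Suc k)) \<le> ?T x \<and> ?T x \<le> N \<and> ?T x = Suc N - S2 (\<rho> x)" for x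
  proof -
    assume x: "x \<in> D - B"
    then have "\<rho> x \<in> C" using rim by auto
    then have "1 \<le> S2 (\<rho> x)" "S2 (\<rho> x) \<le> N - Suc (Suc k)" using stdT_range[OF S2 \<open>\<rho> x \<in> C\<close>] cardC by auto
    moreover have "x \<notin> A" "x \<noteq> u" "x \<noteq> u'" using x AB uA by auto
    ultimately show ?thesis using x kN by (simp add: F_def; linarith)
  qed
  have vu: "?T u = Suc k" "?T u' = Suc (Suc k)" using uA uu by (auto simp: F_def)
  have Dparts: "x \<in> D \<Longrightarrow> x \<in> A \<or> x = u \<or> x = u' \<or> x \<in> D - B" for x using BA by auto
  have l1: "{x \<in> D. ?T x \<le> k} = A"
  proof (intro set_eqI iffI)
    fix x assume "x \<in> {x \<in> D. ?T x \<le> k}"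
    then have xD: "x \<in> D" "?T x \<le> k" by auto
    show "x \<in> A"
    proof (rule ccontr)
      assume "x \<notin> A"
      then have "x = u \<or> x = u' \<or> x \<in> D - B" using Dparts xD by blast
      then have "?T x > k"
      proof (elim disjE)
        assume "x \<in> D - B" then show ?thesis using v2[of x] by linarith
      qed (use vu in simp_all)
      with xD show False by simp
    qed
  next
    fix x assume xA: "x \<in> A"
    then have "x \<in> D" using AB BD by blast
    moreover have "?T x \<le> k" using v1[OF xA] by linarith
    ultimately show "x \<in> {x \<in> D. ?T x \<le> k}" by simp
  qed
  have l2: "{x \<in> D. ?T x \<le> Suc (Suc k)} = B"
  proof (intro set_eqI iffI)
    fix x assume "x \<in> {x \<in> D. ?T x \<le> Suc (Suc k)}"
    then have xD: "x \<in> D" "?T x \<le> Suc (Suc k)" by auto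
    show "x \<in> B"
    proof (rule ccontr)
      assume "x \<notin> B"
      then have "x \<in> D - B" using xD by blast
      then have "?T x > Suc (Suc k)" using v2[of x] by linarith
      with xD show False by simp
    qed
  next
    fix x assume "x \<in> B"
    then have "x \<in> A \<or> x = u \<or> x = u'" using BA by auto
    moreover have "x \<in> D" using BD \<open>x \<in> B\<close> by blast
    ultimately show "x \<in> {x \<in> D. ?T x \<le> Suc (Suc k)}"
    proof (elim disjE)
      assume "x \<in> A" then show ?thesis using v1[of x] \<open>x \<in> D\<close> by simp
    qed (use vu \<open>x \<in> D\<close> in auto)
  qed
  have inj: "inj_on ?T D"
  proof (rule inj_onI)
    fix x y assume x: "x \<in> D" and y: "y \<in> D" and e: "?T x = ?T y"
    have eA: "x \<in> A \<longleftrightarrow> y \<in> A" using memlev[OF l1[symmetric] x] memlev[OF l1[symmetric] y] e by simp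
    have eB: "x \<in> B \<longleftrightarrow> y \<in> B" using memlev[OF l2[symmetric] x] memlev[OF l2[symmetric] y] e by simp
    consider "x \<in> A" | "x \<in> B - A" | "x \<in> D - B" using x by blast
    then show "x = y"
    proof cases
      case 1
      then show ?thesis using eA e stdT_inj[OF S1] by (simp add: F_def)
    next
      case 2
      then have "y \<in> B - A" using eA eB by blast
      then have "x = u \<or> x = u'" "y = u \<or> y = u'" using 2 BA by blast+
      then show ?thesis using e vu by auto
    next
      case 3
      then have a: "x \<in> D - B" "y \<in> D - B" using eB y by auto
      have rc: "\<rho> x \<in> C" "\<rho> y \<in> C" using a rim by auto
      have "S2 (\<rho> x) \<le> N" using stdT_range[OF S2 rc(1)] cardC by linarith
      moreover have "S2 (\<rho> y) \<le> N" using stdT_range[OF S2 rc(2)] cardC by linarith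
      moreover have "Suc N - S2 (\<rho> x) = Suc N - S2 (\<rho> y)" using e v2[OF a(1)] v2[OF a(2)] by simp
      ultimately have "S2 (\<rho> x) = S2 (\<rho> y)" by linarith
      then have "\<rho> x = \<rho> y" using stdT_inj[OF S2] rc by blast
      then show ?thesis using rinj a by (meson inj_onD)
    qed
  qed
  have rng: "?T ` D \<subseteq> {1..card D}"
  proof
    fix z assume "z \<in> ?T ` D"
    then obtain x where x: "x \<in> D" "z = ?T x" by auto
    consider "x \<in> A" | "x = u" | "x = u'" | "x \<in> D - B" using Dparts x(1) by blast
    then show "z \<in> {1..card D}"
    proof cases
      case 1
      have "1 \<le> ?T x \<and> ?T x \<le> k" using v1 1 by blast
      then show ?thesis using x(2) kN by (simp add: N_def)
    next
      case 4
      have "Suc (Suc (Suc k)) \<le> ?T x \<and> ?T x \<le> N" using v2 4 by blast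
      then show ?thesis using x(2) kN by (simp add: N_def)
    qed (use vu x kN in \<open>simp_all add: N_def\<close>)
  qed
  have out: "\<forall>x. x \<notin> D \<longrightarrow> ?T x = 0" using AB BD uA by (auto simp: F_def)
  have mono: "\<forall>x\<in>D. \<forall>y\<in>D. prec x y \<longrightarrow> ?T x < ?T y"
  proof (intro ballI impI)
    fix x y assume x: "x \<in> D" and y: "y \<in> D" and p: "prec x y"
    consider "y \<in> A" | "y \<in> B - A" | "y \<in> D - B" using y by auto
    then show "?T x < ?T y"
    proof cases
      case 1
      then have "x \<in> A" using Acl x p by blast
      then show ?thesis using 1 stdT_mono[OF S1 _ _ p] by (simp add: F_def)
    next
      case 2
      have xB: "x \<in> B" using Bcl 2 x p by blast
      show ?thesis
      proof (cases "x \<in> A")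
        case True
        have "?T x \<le> k" using v1 True by blast
        moreover have "y = u \<or> y = u'" using 2 BA by auto
        ultimately show ?thesis using vu by auto
      next
        case False
        then have "x = u \<or> x = u'" using xB BA by auto
        moreover have "y = u \<or> y = u'" using 2 BA by auto
        ultimately have "x = u \<and> y = u'" using p prec_asym[OF puu] prec_asym[of x x] by blast
        then show ?thesis using vu by simp
      qed
    next
      case 3
      show ?thesis
      proof (cases "x \<in> D - B")
        case True
        have "prec (\<rho> y) (\<rho> x)" using rrev[OF True 3] p by simp
        moreover have "\<rho> x \<in> C" "\<rho> y \<in> C" using True 3 rim by auto
        ultimately have "S2 (\<rho> y) < S2 (\<rho> x)" using stdT_mono[OF S2] by blast
        moreover have "S2 (\<rho> x) \<le> N" using stdT_range[OF S2 \<open>\<rho> x \<in> C\<close>] cardC by linarith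
        ultimately show ?thesis using v2[OF True] v2[OF 3] by simp
      next
        case False
        then have "x \<in> A \<or> x = u \<or> x = u'" using BA x False by blast
        then show ?thesis
        proof (elim disjE)
          assume "x \<in> A" then have "?T x \<le> k" using v1 by blast
          then show ?thesis using v2[OF 3] by linarith
        qed (use v2[OF 3] vu in auto)
      qed
    qed
  qed
  have std: "?T \<in> stdT D" using inj rng out mono by (simp add: stdT_def)
  show ?thesis unfolding Xset_def using std l1 l2 by (intro CollectI conjI)
qed


lemma X_vals:
  assumes T: "T \<in> Xset"
  shows "T u = Suc k" "T u' = Suc (Suc k)"
    "\<And>x. x \<in> A \<Longrightarrow> 1 \<le> T x \<and> T x \<le> k"
    "\<And>x. x \<in> D - B \<Longrightarrow> Suc (Suc k) < T x \<and> T x \<le> N"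
proof -
  have all: "T \<in> stdT D \<and> {x \<in> D. T x \<le> k} = A \<and> {x \<in> D. T x \<le> Suc (Suc k)} = B"
    using T unfolding Xset_def by (rule CollectD)
  then have std: "T \<in> stdT D" and l1: "{x \<in> D. T x \<le> k} = A" and l2: "{x \<in> D. T x \<le> Suc (Suc k)} = B"
    by blast+
  have uD: "u \<in> D" "u' \<in> D" using uA BD by auto
  have "\<not> T u \<le> k" "\<not> T u' \<le> k" using memlev[OF l1[symmetric] uD(1)] memlev[OF l1[symmetric] uD(2)] uA by auto
  moreover have "T u \<le> Suc (Suc k)" "T u' \<le> Suc (Suc k)"
    using memlev[OF l2[symmetric] uD(1)] memlev[OF l2[symmetric] uD(2)] uA by auto
  moreover have "T u < T u'" using stdT_mono[OF std uD puu] .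
  ultimately show "T u = Suc k" "T u' = Suc (Suc k)" by linarith+
  show "\<And>x. x \<in> A \<Longrightarrow> 1 \<le> T x \<and> T x \<le> k"
  proof -
    fix x assume "x \<in> A"
    then have "x \<in> D" using AB BD by blast
    then show "1 \<le> T x \<and> T x \<le> k" using memlev[OF l1[symmetric], of x] \<open>x \<in> A\<close> stdT_range[OF std] by auto
  qed
  show "\<And>x. x \<in> D - B \<Longrightarrow> Suc (Suc k) < T x \<and> T x \<le> N"
  proof -
    fix x assume x: "x \<in> D - B"
    then show "Suc (Suc k) < T x \<and> T x \<le> N" using memlev[OF l2[symmetric], of x] stdT_range[OF std, of x]
      by (auto simp: N_def)
  qed
qed

lemma G_in:
  assumes T: "T \<in> Xset"
  shows "G T \<in> stdT A \<times> stdT C"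
proof -
  have std: "T \<in> stdT D" using T unfolding Xset_def by (blast dest: CollectD)
  note v = X_vals[OF T]
  let ?S1 = "fst (G T)" and ?S2 = "snd (G T)"
  have AD: "A \<subseteq> D" using AB BD by blast
  have s1: "?S1 \<in> stdT A"
  proof -
    have "inj_on ?S1 A"
    proof (rule inj_onI)
      fix x y assume xy: "x \<in> A" "y \<in> A" "?S1 x = ?S1 y"
      then have "T x = T y" by (simp add: G_def)
      then show "x = y" using stdT_inj[OF std] AD xy by blast
    qed
    moreover have "?S1 ` A \<subseteq> {1..card A}" using v(3) by (auto simp: G_def k_def)
    moreover have "\<forall>x. x \<notin> A \<longrightarrow> ?S1 x = 0" by (simp add: G_def)
    moreover have "\<forall>x\<in>A. \<forall>y\<in>A. prec x y \<longrightarrow> ?S1 x < ?S1 y"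
    proof (intro ballI impI)
      fix x y assume xy: "x \<in> A" "y \<in> A" "prec x y"
      then have "T x < T y" using stdT_mono[OF std] AD by blast
      then show "?S1 x < ?S1 y" using xy by (simp add: G_def)
    qed
    ultimately show ?thesis by (simp add: stdT_def)
  qed
  have s2: "?S2 \<in> stdT C"
  proof -
    have val: "y \<in> C \<Longrightarrow> ?S2 y = Suc N - T (inv_into (D - B) \<rho> y)" for y by (simp add: G_def)
    have inj: "inj_on ?S2 C"
    proof (rule inj_onI)
      fix y1 y2 assume y: "y1 \<in> C" "y2 \<in> C" and e: "?S2 y1 = ?S2 y2"
      have r1: "inv_into (D - B) \<rho> y1 \<in> D - B" "\<rho> (inv_into (D - B) \<rho> y1) = y1" using rinv[OF y(1)] by auto
      have r2: "inv_into (D - B) \<rho> y2 \<in> D - B" "\<rho> (inv_into (D - B) \<rho> y2) = y2" using rinv[OF y(2)] by auto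
      have "T (inv_into (D - B) \<rho> y1) = T (inv_into (D - B) \<rho> y2)"
        using e val[OF y(1)] val[OF y(2)] v(4)[OF r1(1)] v(4)[OF r2(1)] by linarith
      then have "inv_into (D - B) \<rho> y1 = inv_into (D - B) \<rho> y2" using stdT_inj[OF std] r1 r2 by blast
      then show "y1 = y2" using r1 r2 by metis
    qed
    have rng: "?S2 ` C \<subseteq> {1..card C}"
    proof
      fix z assume "z \<in> ?S2 ` C"
      then obtain y where y: "y \<in> C" "z = ?S2 y" by auto
      have r: "inv_into (D - B) \<rho> y \<in> D - B" using rinv[OF y(1)] by auto
      show "z \<in> {1..card C}" using v(4)[OF r] val[OF y(1)] y(2) cardC by auto
    qed
    have out: "\<forall>y. y \<notin> C \<longrightarrow> ?S2 y = 0" by (simp add: G_def)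
    have mono: "\<forall>y1\<in>C. \<forall>y2\<in>C. prec y1 y2 \<longrightarrow> ?S2 y1 < ?S2 y2"
    proof (intro ballI impI)
      fix y1 y2 assume y: "y1 \<in> C" "y2 \<in> C" and p: "prec y1 y2"
      have r1: "inv_into (D - B) \<rho> y1 \<in> D - B" "\<rho> (inv_into (D - B) \<rho> y1) = y1" using rinv[OF y(1)] by auto
      have r2: "inv_into (D - B) \<rho> y2 \<in> D - B" "\<rho> (inv_into (D - B) \<rho> y2) = y2" using rinv[OF y(2)] by auto
      have "prec (inv_into (D - B) \<rho> y2) (inv_into (D - B) \<rho> y1)" using rrev[OF r2(1) r1(1)] r1 r2 p by simp
      then have "T (inv_into (D - B) \<rho> y2) < T (inv_into (D - B) \<rho> y1)" using stdT_mono[OF std] r1 r2 by blast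
      then show "?S2 y1 < ?S2 y2" using val[OF y(1)] val[OF y(2)] v(4)[OF r1(1)] v(4)[OF r2(1)] by linarith
    qed
    show ?thesis using inj rng out mono by (simp add: stdT_def)
  qed
  show ?thesis using s1 s2 by (simp add: mem_Times_iff)
qed

lemma GF:
  assumes S1: "S1 \<in> stdT A" and S2: "S2 \<in> stdT C"
  shows "G (F (S1, S2)) = (S1, S2)"
proof -
  have "fst (G (F (S1, S2))) = S1"
  proof
    fix x show "fst (G (F (S1, S2))) x = S1 x"
      by (cases "x \<in> A") (simp_all add: G_def F_def stdT_out[OF S1])
  qed
  moreover have "snd (G (F (S1, S2))) = S2"
  proof
    fix y show "snd (G (F (S1, S2))) y = S2 y"
    proof (cases "y \<in> C")
      case True
      have r: "inv_into (D - B) \<rho> y \<in> D - B" "\<rho> (inv_into (D - B) \<rho> y) = y" using rinv[OF True] by auto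
      have nn: "inv_into (D - B) \<rho> y \<notin> A" "inv_into (D - B) \<rho> y \<noteq> u" "inv_into (D - B) \<rho> y \<noteq> u'"
        using r(1) uA AB by auto
      have "S2 y \<le> N" using stdT_range[OF S2 True] cardC by linarith
      then show ?thesis using True r nn by (simp add: G_def F_def)
    next
      case False then show ?thesis using stdT_out[OF S2] by (simp add: G_def)
    qed
  qed
  ultimately show ?thesis by (metis prod.collapse)
qed

lemma FG:
  assumes T: "T \<in> Xset"
  shows "F (G T) = T"
proof
  have std: "T \<in> stdT D" using T unfolding Xset_def by (blast dest: CollectD)
  note v = X_vals[OF T]
  fix x show "F (G T) x = T x"
  proof -
    consider "x \<in> A" | "x = u" | "x = u'" | "x \<in> D - B" | "x \<notin> D" using BA by blast
    then show ?thesis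
    proof cases
      case 4
      have nn: "x \<notin> A" "x \<noteq> u" "x \<noteq> u'" using 4 uA AB by auto
      have rc: "\<rho> x \<in> C" using 4 rim by auto
      have "inv_into (D - B) \<rho> (\<rho> x) = x" using 4 rinj by (simp add: inv_into_f_f)
      then show ?thesis using 4 nn rc v(4)[OF 4] by (simp add: F_def G_def)
    next
      case 5
      have "x \<notin> A" "x \<noteq> u" "x \<noteq> u'" using 5 uA AB BD by auto
      then show ?thesis using 5 stdT_out[OF std 5] by (simp add: F_def G_def)
    next
      case 1 then show ?thesis by (simp add: F_def G_def)
    next
      case 2 then show ?thesis using v(1) uA by (simp add: F_def G_def)
    next
      case 3 then show ?thesis using v(2) uA uu by (simp add: F_def G_def)
    qed
  qed
qed

theorem split_card: "card Xset = card (stdT A) * card (stdT C)"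
proof -
  have "bij_betw F (stdT A \<times> stdT C) Xset"
  proof (rule bij_betw_byWitness[where f' = G])
    show "\<forall>a\<in>stdT A \<times> stdT C. G (F a) = a" using GF by auto
    show "\<forall>a'\<in>Xset. F (G a') = a'" using FG by auto
    show "F ` (stdT A \<times> stdT C) \<subseteq> Xset" using F_in by auto
    show "G ` Xset \<subseteq> stdT A \<times> stdT C" using G_in by blast
  qed
  then have "card Xset = card (stdT A \<times> stdT C)" by (simp add: bij_betw_same_card)
  then show ?thesis by (simp add: card_cartesian_product)
qed

end


lemma diagram_mem: "(i, j) \<in> diagram la \<longleftrightarrow> 1 \<le> i \<and> i \<le> length la \<and> 1 \<le> j \<and> j \<le> la ! (i - 1)"
  by (simp add: diagram_def)

lemma part_geq: "is_partition la \<Longrightarrow> a \<le> b \<Longrightarrow> b < length la \<Longrightarrow> la ! b \<le> la ! a"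
  unfolding is_partition_def using sorted_wrt_nth_less[of "(\<ge>)" la a b]
  by (cases "a = b") auto

lemma part_pos: "is_partition la \<Longrightarrow> i < length la \<Longrightarrow> 0 < la ! i"
  unfolding is_partition_def by (auto simp: in_set_conv_nth)

lemma part_down:
  assumes "is_partition la" "(i, j) \<in> diagram la" "1 \<le> i'" "i' \<le> i" "1 \<le> j'" "j' \<le> j"
  shows "(i', j') \<in> diagram la"
proof -
  have "la ! (i - 1) \<le> la ! (i' - 1)" using assms part_geq[of la "i' - 1" "i - 1"] by (auto simp: diagram_mem)
  then show ?thesis using assms by (auto simp: diagram_mem)
qed

lemma part_inj:
  assumes la: "is_partition la" and mu: "is_partition mu" and e: "diagram la = diagram mu"
  shows "la = mu"
proof -
  have len: "length la = length mu"
  proof (rule ccontr)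
    assume "length la \<noteq> length mu"
    then consider "length la < length mu" | "length mu < length la" by linarith
    then show False
    proof cases
      case 1
      then have "(length mu, 1) \<in> diagram mu" using part_pos[OF mu, of "length mu - 1"]
        by (auto simp: diagram_mem Suc_le_eq)
      moreover have "(length mu, 1) \<notin> diagram la" using 1 by (simp add: diagram_mem)
      ultimately show False using e by simp
    next
      case 2
      then have "(length la, 1) \<in> diagram la" using part_pos[OF la, of "length la - 1"]
        by (auto simp: diagram_mem Suc_le_eq)
      moreover have "(length la, 1) \<notin> diagram mu" using 2 by (simp add: diagram_mem)
      ultimately show False using e by simp
    qed
  qed
  show ?thesis
  proof (rule nth_equalityI[OF len])
    fix i assume i: "i < length la"
    show "la ! i = mu ! i"
    proof (rule ccontr)
      assume "la ! i \<noteq> mu ! i"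
      then consider "la ! i < mu ! i" | "mu ! i < la ! i" by linarith
      then show False
      proof cases
        case 1
        have "(Suc i, mu ! i) \<in> diagram mu" using i len part_pos[OF mu, of i] by (auto simp: diagram_mem Suc_le_eq)
        moreover have "(Suc i, mu ! i) \<notin> diagram la" using 1 by (simp add: diagram_mem)
        ultimately show False using e by simp
      next
        case 2
        have "(Suc i, la ! i) \<in> diagram la" using i part_pos[OF la, of i] by (auto simp: diagram_mem Suc_le_eq)
        moreover have "(Suc i, la ! i) \<notin> diagram mu" using 2 by (simp add: diagram_mem)
        ultimately show False using e by simp
      qed
    qed
  qed
qed

lemma down_interval:
  assumes fin: "finite R" and pos: "\<forall>j\<in>R. 1 \<le> j" and dc: "\<forall>j\<in>R. \<forall>j'. 1 \<le> j' \<longrightarrow> j' \<le> j \<longrightarrow> j' \<in> R"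
  shows "R = {1..card R}"
proof (cases "R = {}")
  case True then show ?thesis by simp
next
  case False
  define M where "M = Max R"
  have MR: "M \<in> R" using Max_in[OF fin False] by (simp add: M_def)
  have "R = {1..M}"
  proof
    show "R \<subseteq> {1..M}" using pos Max_ge[OF fin] by (auto simp: M_def)
    show "{1..M} \<subseteq> R" using dc MR by auto
  qed
  then show ?thesis by simp
qed

theorem part_ex:
  assumes fin: "finite S" and pos: "\<And>i j. (i, j) \<in> S \<Longrightarrow> 1 \<le> i \<and> 1 \<le> j"
    and dc: "\<And>i j i' j'. (i, j) \<in> S \<Longrightarrow> 1 \<le> i' \<Longrightarrow> i' \<le> i \<Longrightarrow> 1 \<le> j' \<Longrightarrow> j' \<le> j \<Longrightarrow> (i', j') \<in> S"
  shows "\<exists>la. is_partition la \<and> diagram la = S"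
proof -
  define Row where "Row i = {j. (i, j) \<in> S}" for i
  define L where "L i = card (Row i)" for i
  define Col where "Col = {i. (i, 1) \<in> S}"
  define r where "r = card Col"
  have finRow: "finite (Row i)" for i
  proof -
    have "Row i \<subseteq> snd ` S" by (force simp: Row_def)
    then show ?thesis by (rule finite_subset) (simp add: fin)
  qed
  have finCol: "finite Col"
  proof -
    have "Col \<subseteq> fst ` S" by (force simp: Col_def)
    then show ?thesis by (rule finite_subset) (simp add: fin)
  qed
  have Row_eq: "Row i = {1..L i}" for i
    unfolding L_def
    by (rule down_interval[OF finRow]) (auto simp: Row_def dest: pos intro: dc)
  have Col_eq: "Col = {1..r}"
    unfolding r_def
    by (rule down_interval[OF finCol]) (auto simp: Col_def dest: pos intro: dc)
  have memS: "(i, j) \<in> S \<longleftrightarrow> 1 \<le> i \<and> i \<le> r \<and> 1 \<le> j \<and> j \<le> L i" for i j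
  proof
    assume ij: "(i, j) \<in> S"
    then have "(i, 1) \<in> S" using pos[OF ij] dc[OF ij, of i 1] by auto
    then have "i \<in> Col" by (simp add: Col_def)
    moreover have "j \<in> Row i" using ij by (simp add: Row_def)
    ultimately show "1 \<le> i \<and> i \<le> r \<and> 1 \<le> j \<and> j \<le> L i" using Col_eq Row_eq[of i] by auto
  next
    assume "1 \<le> i \<and> i \<le> r \<and> 1 \<le> j \<and> j \<le> L i"
    then have "j \<in> Row i" using Row_eq[of i] by auto
    then show "(i, j) \<in> S" by (simp add: Row_def)
  qed
  define la where "la = map L [1..<Suc r]"
  have len: "length la = r" by (simp add: la_def del: upt_Suc)
  have nth: "i < r \<Longrightarrow> la ! i = L (Suc i)" for i by (simp add: la_def nth_map del: upt_Suc)
  have Lpos: "1 \<le> i \<Longrightarrow> i \<le> r \<Longrightarrow> 1 \<le> L i" for i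
    using memS[of i 1] Col_eq by (auto simp: Col_def)
  have Lmono: "i \<le> i' \<Longrightarrow> 1 \<le> i \<Longrightarrow> L i' \<le> L i" for i i'
  proof -
    assume "i \<le> i'" "1 \<le> i"
    then have "Row i' \<subseteq> Row i" by (auto simp: Row_def intro: dc dest: pos)
    then show "L i' \<le> L i" unfolding L_def by (rule card_mono[OF finRow])
  qed
  have part: "is_partition la"
    unfolding is_partition_def
  proof
    show "sorted_wrt (\<ge>) la"
      unfolding sorted_wrt_iff_nth_less using len nth Lmono by simp
    show "\<forall>x\<in>set la. 0 < x" using Lpos by (auto simp: la_def Suc_le_eq simp del: upt_Suc)
  qed
  have "diagram la = S"
  proof (intro set_eqI)
    fix x :: "nat \<times> nat"
    obtain i j where x: "x = (i, j)" by (cases x)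
    show "x \<in> diagram la \<longleftrightarrow> x \<in> S"
    proof (cases "1 \<le> i \<and> i \<le> r")
      case True
      then have "i - 1 < r" by linarith
      then have "la ! (i - 1) = L i" using nth[of "i - 1"] True by simp
      then show ?thesis using True memS len by (simp add: x diagram_mem)
    next
      case False
      then show ?thesis using memS len by (auto simp: x diagram_mem)
    qed
  qed
  then show ?thesis using part by blast
qed

lemma sdiag_mem: "(i, j) \<in> shifted_diagram la \<longleftrightarrow> i \<le> j \<and> (i, Suc j - i) \<in> diagram la"
proof
  assume "(i, j) \<in> shifted_diagram la"
  then obtain i0 j0 where h: "(i, j) = (i0, j0 + i0 - 1)" "1 \<le> i0" "i0 \<le> length la" "1 \<le> j0" "j0 \<le> la ! (i0 - 1)"
    unfolding shifted_diagram_def by blast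
  then show "i \<le> j \<and> (i, Suc j - i) \<in> diagram la" by (auto simp: diagram_mem)
next
  assume h: "i \<le> j \<and> (i, Suc j - i) \<in> diagram la"
  have e: "(i, j) = (i, (Suc j - i) + i - 1)" using h by auto
  show "(i, j) \<in> shifted_diagram la" unfolding shifted_diagram_def mem_Collect_eq
    by (rule exI[of _ i], rule exI[of _ "Suc j - i"]) (use h e in \<open>auto simp: diagram_mem\<close>)
qed

lemma strict_part: "is_strict_partition la \<Longrightarrow> is_partition la"
  unfolding is_strict_partition_def is_partition_def
  by (auto elim: sorted_wrt_mono_rel[rotated])

lemma strict_gap:
  assumes "is_strict_partition la" "a + d < length la"
  shows "la ! (a + d) + d \<le> la ! a"
  using assms(2)
proof (induction d)
  case 0 then show ?case by simp
next
  case (Suc d)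
  have "la ! (a + Suc d) < la ! (a + d)"
    using assms(1) Suc.prems unfolding is_strict_partition_def
    by (auto dest: sorted_wrt_nth_less)
  then show ?case using Suc by simp
qed

lemma spart_down:
  assumes sp: "is_strict_partition la" and ij: "(i, j) \<in> shifted_diagram la"
    and "1 \<le> i'" "i' \<le> i" "i' \<le> j'" "j' \<le> j"
  shows "(i', j') \<in> shifted_diagram la"
proof -
  have h: "i \<le> j" "1 \<le> i" "i \<le> length la" "Suc j - i \<le> la ! (i - 1)"
    using ij by (auto simp: sdiag_mem diagram_mem)
  have "la ! ((i' - 1) + (i - i')) + (i - i') \<le> la ! (i' - 1)"
    using strict_gap[OF sp, of "i' - 1" "i - i'"] h assms by simp
  moreover have "(i' - 1) + (i - i') = i - 1" using assms h by simp
  ultimately have "la ! (i - 1) + (i - i') \<le> la ! (i' - 1)" by simp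
  then show ?thesis using h assms by (auto simp: sdiag_mem diagram_mem)
qed

lemma diag_from_sdiag: "(i, j) \<in> diagram la \<longleftrightarrow> 1 \<le> j \<and> (i, j + i - 1) \<in> shifted_diagram la"
  by (auto simp: sdiag_mem diagram_mem)

lemma spart_inj:
  assumes "is_strict_partition la" "is_strict_partition mu" "shifted_diagram la = shifted_diagram mu"
  shows "la = mu"
proof -
  have "diagram la = diagram mu"
    using assms(3) by (auto simp: diag_from_sdiag)
  then show ?thesis using part_inj strict_part assms by blast
qed

theorem spart_ex:
  assumes fin: "finite S" and pos: "\<And>i j. (i, j) \<in> S \<Longrightarrow> 1 \<le> i \<and> i \<le> j"
    and dc: "\<And>i j i' j'. (i, j) \<in> S \<Longrightarrow> 1 \<le> i' \<Longrightarrow> i' \<le> i \<Longrightarrow> i' \<le> j' \<Longrightarrow> j' \<le> j \<Longrightarrow> (i', j') \<in> S"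
  shows "\<exists>la. is_strict_partition la \<and> shifted_diagram la = S"
proof -
  define S' where "S' = (\<lambda>(i, j). (i, Suc j - i)) ` S"
  have memS': "(i, j) \<in> S' \<longleftrightarrow> 1 \<le> j \<and> (i, j + i - 1) \<in> S" for i j
  proof
    assume "(i, j) \<in> S'"
    then obtain i0 j0 where "(i0, j0) \<in> S" "i = i0" "j = Suc j0 - i0" by (auto simp: S'_def)
    moreover then have "i0 \<le> j0" using pos by blast
    ultimately show "1 \<le> j \<and> (i, j + i - 1) \<in> S" by simp
  next
    assume h: "1 \<le> j \<and> (i, j + i - 1) \<in> S"
    then have "(i, j) = (\<lambda>(i, j). (i, Suc j - i)) (i, j + i - 1)" by auto
    then show "(i, j) \<in> S'" unfolding S'_def using h by blast
  qed
  have "\<exists>la. is_partition la \<and> diagram la = S'"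
  proof (rule part_ex)
    show "finite S'" using fin by (simp add: S'_def)
    show "\<And>i j. (i, j) \<in> S' \<Longrightarrow> 1 \<le> i \<and> 1 \<le> j" using memS' pos by blast
    show "\<And>i j i' j'. (i, j) \<in> S' \<Longrightarrow> 1 \<le> i' \<Longrightarrow> i' \<le> i \<Longrightarrow> 1 \<le> j' \<Longrightarrow> j' \<le> j \<Longrightarrow> (i', j') \<in> S'"
    proof -
      fix i j i' j' assume a: "(i, j) \<in> S'" "1 \<le> i'" "i' \<le> i" "1 \<le> j'" "j' \<le> j"
      then have s: "(i, j + i - 1) \<in> S" "1 \<le> j" using memS' by auto
      have "(i', j' + i' - 1) \<in> S" using dc[OF s(1), of i' "j' + i' - 1"] a s by simp
      then show "(i', j') \<in> S'" using memS' a by simp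
    qed
  qed
  then obtain la where la: "is_partition la" "diagram la = S'" by blast
  have sd: "shifted_diagram la = S"
  proof (intro set_eqI)
    fix x :: "nat \<times> nat"
    obtain i j where x: "x = (i, j)" by (cases x)
    show "x \<in> shifted_diagram la \<longleftrightarrow> x \<in> S"
      unfolding x sdiag_mem la(2) memS' using pos
      by (auto simp: Suc_diff_le)
  qed
  have "sorted_wrt (>) la"
  proof (subst sorted_wrt_iff_nth_Suc_transp)
    show "transp ((>) :: nat \<Rightarrow> nat \<Rightarrow> bool)" by (auto simp: transp_def)
    show "\<forall>a. Suc a < length la \<longrightarrow> la ! Suc a < la ! a"
    proof (intro allI impI)
      fix a assume a: "Suc a < length la"
      have "(Suc (Suc a), la ! Suc a) \<in> diagram la"
        using a part_pos[OF la(1), of "Suc a"] by (simp add: diagram_mem)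
      then have "(Suc (Suc a), la ! Suc a + Suc a) \<in> S" using la(2) memS' by simp
      then have "(Suc a, la ! Suc a + Suc a) \<in> S" by (rule dc) auto
      then have "(Suc a, Suc (la ! Suc a)) \<in> S'" using memS' by simp
      then have "Suc (la ! Suc a) \<le> la ! a" using la(2)[symmetric] by (simp add: diagram_mem)
      then show "la ! Suc a < la ! a" by simp
    qed
  qed
  then have "is_strict_partition la" using la(1) by (simp add: is_strict_partition_def is_partition_def)
  then show ?thesis using sd by blast
qed


definition idealin :: "(nat \<times> nat) set \<Rightarrow> (nat \<times> nat) set \<Rightarrow> bool" where
  "idealin D S \<longleftrightarrow> S \<subseteq> D \<and> (\<forall>x\<in>S. \<forall>y\<in>D. fst y \<le> fst x \<and> snd y \<le> snd x \<longrightarrow> y \<in> S)"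

lemma prec_le: "prec y x \<Longrightarrow> fst y \<le> fst x \<and> snd y \<le> snd x"
  by (auto simp: prec_def)

locale gen = convex_shape D for D +
  fixes ispart :: "nat list \<Rightarrow> bool" and dg :: "nat list \<Rightarrow> (nat \<times> nat) set"
    and \<rho> :: "nat \<times> nat \<Rightarrow> nat \<times> nat" and cmp :: "nat list \<Rightarrow> nat list"
  assumes dg_inj: "\<And>mu nu. ispart mu \<Longrightarrow> ispart nu \<Longrightarrow> dg mu = dg nu \<Longrightarrow> mu = nu"
    and ideal_ex: "\<And>S. idealin D S \<Longrightarrow> \<exists>mu. ispart mu \<and> dg mu = S"
    and dg_ideal: "\<And>mu. ispart mu \<Longrightarrow> dg mu \<subseteq> D \<Longrightarrow> idealin D (dg mu)"
    and corner: "\<And>x y. x \<in> D \<Longrightarrow> y \<in> D \<Longrightarrow> fst y \<le> fst x \<Longrightarrow> snd y \<le> snd x \<Longrightarrow> (fst y, snd x) \<in> D"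
    and rho_D: "\<And>x. x \<in> D \<Longrightarrow> \<rho> x \<in> D"
    and rho_inv: "\<And>x. x \<in> D \<Longrightarrow> \<rho> (\<rho> x) = x"
    and rho_le: "\<And>x y. x \<in> D \<Longrightarrow> y \<in> D \<Longrightarrow> fst y \<le> fst x \<Longrightarrow> snd y \<le> snd x \<Longrightarrow>
        fst (\<rho> x) \<le> fst (\<rho> y) \<and> snd (\<rho> x) \<le> snd (\<rho> y)"
    and rho_prec: "\<And>x y. x \<in> D \<Longrightarrow> y \<in> D \<Longrightarrow> prec x y \<longleftrightarrow> prec (\<rho> y) (\<rho> x)"
    and cmp_def: "\<And>nu. cmp nu = (THE la. ispart la \<and> dg la = \<rho> ` (D - dg nu))"
begin

definition pairsG where
  "pairsG = {(mu, nu). ispart mu \<and> ispart nu \<and> dg mu \<subseteq> dg nu \<and> dg nu \<subseteq> D \<and>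
      (\<exists>i j. (i, j) \<in> D - dg mu \<and> dg nu = dg mu \<union> {(i, j), (i, j + 1)})}"

lemma the_part:
  assumes "idealin D S"
  shows "ispart (THE mu. ispart mu \<and> dg mu = S) \<and> dg (THE mu. ispart mu \<and> dg mu = S) = S"
proof -
  obtain mu where mu: "ispart mu" "dg mu = S" using ideal_ex[OF assms] by blast
  have "(THE mu. ispart mu \<and> dg mu = S) = mu"
    by (rule the_equality) (use mu dg_inj in auto)
  then show ?thesis using mu by simp
qed

lemma the_part_eq:
  assumes "ispart mu" "dg mu = S"
  shows "(THE mu. ispart mu \<and> dg mu = S) = mu"
  by (rule the_equality) (use assms dg_inj in auto)

lemma rho_inj: "inj_on \<rho> D"
  by (rule inj_on_inverseI[where g = \<rho>]) (simp add: rho_inv)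

lemma compl_ideal:
  assumes "idealin D B"
  shows "idealin D (\<rho> ` (D - B))"
  unfolding idealin_def
proof (intro conjI ballI impI)
  show "\<rho> ` (D - B) \<subseteq> D" using rho_D by auto
next
  fix z w assume z: "z \<in> \<rho> ` (D - B)" and w: "w \<in> D" and le: "fst w \<le> fst z \<and> snd w \<le> snd z"
  obtain x where x: "x \<in> D - B" "z = \<rho> x" using z by blast
  have zD: "z \<in> D" using x rho_D by auto
  have "fst (\<rho> z) \<le> fst (\<rho> w) \<and> snd (\<rho> z) \<le> snd (\<rho> w)" using rho_le[OF zD w] le by simp
  then have le2: "fst x \<le> fst (\<rho> w) \<and> snd x \<le> snd (\<rho> w)" using x rho_inv by simp
  have "\<rho> w \<notin> B"
  proof
    assume "\<rho> w \<in> B"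
    then have "x \<in> B" using assms le2 x(1) unfolding idealin_def by blast
    then show False using x by simp
  qed
  then have "\<rho> w \<in> D - B" using rho_D w by simp
  moreover have "w = \<rho> (\<rho> w)" using rho_inv w by simp
  ultimately show "w \<in> \<rho> ` (D - B)" by blast
qed

lemma cmp_prop:
  assumes "ispart nu" "dg nu \<subseteq> D"
  shows "ispart (cmp nu) \<and> dg (cmp nu) = \<rho> ` (D - dg nu)"
  unfolding cmp_def by (rule the_part[OF compl_ideal[OF dg_ideal[OF assms]]])

definition lev where "lev T v = {x \<in> D. T x \<le> v}"

lemma lev_ideal:
  assumes T: "T \<in> stdT D" shows "idealin D (lev T v)"
  unfolding idealin_def
proof (intro conjI ballI impI)
  show "lev T v \<subseteq> D" by (auto simp: lev_def)
next
  fix x y assume x: "x \<in> lev T v" and y: "y \<in> D" and le: "fst y \<le> fst x \<and> snd y \<le> snd x"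
  have xD: "x \<in> D" "T x \<le> v" using x by (auto simp: lev_def)
  define z where "z = (fst y, snd x)"
  have zD: "z \<in> D" using corner[OF xD(1) y] le by (simp add: z_def)
  have "T y \<le> T z"
  proof (cases "y = z")
    case False
    then have "prec y z" using le by (cases y) (auto simp: prec_def z_def)
    then show ?thesis using stdT_mono[OF T y zD] by simp
  qed simp
  moreover have "T z \<le> T x"
  proof (cases "z = x")
    case False
    then have "prec z x" using le by (cases x) (auto simp: prec_def z_def)
    then show ?thesis using stdT_mono[OF T zD xD(1)] by simp
  qed simp
  ultimately show "y \<in> lev T v" using xD y by (simp add: lev_def)
qed

lemma lev_card:
  assumes T: "T \<in> stdT D" and v: "v \<le> card D"
  shows "card (lev T v) = v"
proof -
  have im: "T ` D = {1..card D}" by (rule stdT_image[OF fin T])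
  have "T ` lev T v = {1..v}"
  proof
    show "T ` lev T v \<subseteq> {1..v}" using stdT_range[OF T] by (auto simp: lev_def)
    show "{1..v} \<subseteq> T ` lev T v"
    proof
      fix w assume w: "w \<in> {1..v}"
      then have "w \<in> T ` D" using im v by auto
      then obtain x where "x \<in> D" "w = T x" by blast
      then show "w \<in> T ` lev T v" using w by (auto simp: lev_def)
    qed
  qed
  moreover have "inj_on T (lev T v)" using T by (auto simp: stdT_def lev_def inj_on_def)
  ultimately show ?thesis by (metis card_atLeastAtMost card_image diff_Suc_1)
qed

lemma finite_pairsG: "finite pairsG"
proof -
  let ?f = "\<lambda>(mu, nu). (dg mu, dg nu)"
  have "inj_on ?f pairsG"
    by (rule inj_onI) (auto simp: pairsG_def dest: dg_inj)
  moreover have sub: "?f ` pairsG \<subseteq> Pow D \<times> Pow D" by (auto simp: pairsG_def)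
  have "finite (?f ` pairsG)" by (rule finite_subset[OF sub]) (simp add: fin)
  ultimately show ?thesis using \<open>finite (?f ` pairsG)\<close> finite_imageD by blast
qed

definition gfun where
  "gfun h = ((THE mu. ispart mu \<and> dg mu = lev (fst h) (snd h - 1)),
             (THE nu. ispart nu \<and> dg nu = lev (fst h) (Suc (snd h))))"

lemma H_props:
  assumes h: "(T, a) \<in> Hset D"
  shows "T \<in> stdT D" "1 \<le> a" "a < card D"
    "cellof D T a \<in> D" "T (cellof D T a) = a"
    "cellof D T (Suc a) = (fst (cellof D T a), Suc (snd (cellof D T a)))"
    "lev T (Suc a) = lev T (a - 1) \<union> {cellof D T a, cellof D T (Suc a)}"
    "cellof D T a \<notin> lev T (a - 1)"
proof -
  show T: "T \<in> stdT D" and a: "1 \<le> a" "a < card D"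
    and c: "cellof D T (Suc a) = (fst (cellof D T a), Suc (snd (cellof D T a)))"
    using h by (auto simp: Hset_def)
  show ca: "cellof D T a \<in> D" "T (cellof D T a) = a" using cellof[OF fin T, of a] a by auto
  have cb: "cellof D T (Suc a) \<in> D" "T (cellof D T (Suc a)) = Suc a" using cellof[OF fin T, of "Suc a"] a by auto
  show "lev T (Suc a) = lev T (a - 1) \<union> {cellof D T a, cellof D T (Suc a)}"
  proof (intro set_eqI iffI)
    fix x assume x: "x \<in> lev T (Suc a)"
    then have xD: "x \<in> D" "T x \<le> Suc a" by (auto simp: lev_def)
    then consider "T x \<le> a - 1" | "T x = a" | "T x = Suc a" by linarith
    then show "x \<in> lev T (a - 1) \<union> {cellof D T a, cellof D T (Suc a)}"
    proof cases
      case 1 then show ?thesis using xD by (simp add: lev_def)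
    next
      case 2 then have "x = cellof D T a" using cellof_eq[OF T xD(1)] by simp
      then show ?thesis by simp
    next
      case 3 then have "x = cellof D T (Suc a)" using cellof_eq[OF T xD(1)] by simp
      then show ?thesis by simp
    qed
  next
    fix x assume "x \<in> lev T (a - 1) \<union> {cellof D T a, cellof D T (Suc a)}"
    then show "x \<in> lev T (Suc a)" using ca cb by (auto simp: lev_def)
  qed
  show "cellof D T a \<notin> lev T (a - 1)" using ca a by (simp add: lev_def)
qed

lemma gfun_in:
  assumes h: "h \<in> Hset D" shows "gfun h \<in> pairsG"
proof -
  obtain T a where ha: "h = (T, a)" by (cases h)
  note hp = H_props[OF h[unfolded ha]]
  let ?mu = "THE mu. ispart mu \<and> dg mu = lev T (a - 1)"
  let ?nu = "THE nu. ispart nu \<and> dg nu = lev T (Suc a)"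
  have mu: "ispart ?mu" "dg ?mu = lev T (a - 1)" using the_part[OF lev_ideal[OF hp(1)]] by auto
  have nu: "ispart ?nu" "dg ?nu = lev T (Suc a)" using the_part[OF lev_ideal[OF hp(1)]] by auto
  have "dg ?nu \<subseteq> D" using nu by (auto simp: lev_def)
  moreover have "dg ?mu \<subseteq> dg ?nu" using mu nu hp(7) by auto
  moreover have "\<exists>i j. (i, j) \<in> D - dg ?mu \<and> dg ?nu = dg ?mu \<union> {(i, j), (i, j + 1)}"
    apply (rule exI[of _ "fst (cellof D T a)"], rule exI[of _ "snd (cellof D T a)"])
    using hp(4,6,7,8) mu nu by simp
  ultimately show ?thesis using mu nu by (simp add: gfun_def ha pairsG_def)
qed

lemma fiber_card:
  assumes p: "(mu, nu) \<in> pairsG"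
  shows "card {h \<in> Hset D. gfun h = (mu, nu)} = card (stdT (dg mu)) * card (stdT (dg (cmp nu)))"
proof -
  have pm: "ispart mu" "ispart nu" "dg mu \<subseteq> dg nu" "dg nu \<subseteq> D" using p by (auto simp: pairsG_def)
  obtain i j where ij: "(i, j) \<in> D - dg mu" "dg nu = dg mu \<union> {(i, j), (i, j + 1)}"
    using p by (auto simp: pairsG_def)
  have Aid: "idealin D (dg mu)" using dg_ideal pm by blast
  have Bid: "idealin D (dg nu)" using dg_ideal pm by blast
  have cp: "ispart (cmp nu)" "dg (cmp nu) = \<rho> ` (D - dg nu)" using cmp_prop[OF pm(2,4)] by auto
  have u'A: "(i, j + 1) \<notin> dg mu"
  proof
    assume "(i, j + 1) \<in> dg mu"
    then have "(i, j) \<in> dg mu" using Aid ij(1) unfolding idealin_def by force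
    then show False using ij by simp
  qed
  have ss: "split_setup D (dg mu) (dg nu) (dg (cmp nu)) (i, j) (i, j + 1) \<rho>"
  proof (rule split_setup.intro)
    show "finite D" by (rule fin)
    show "dg mu \<subseteq> dg nu" by (rule pm(3))
    show "dg nu \<subseteq> D" by (rule pm(4))
    show "dg nu - dg mu = {(i, j), (i, j + 1)}" using ij u'A by auto
    show "(i, j) \<noteq> (i, j + 1)" by simp
    show "prec (i, j) (i, j + 1)" by (simp add: prec_def)
    show "\<And>x y. x \<in> dg mu \<Longrightarrow> y \<in> D \<Longrightarrow> prec y x \<Longrightarrow> y \<in> dg mu"
      using Aid prec_le unfolding idealin_def by blast
    show "\<And>x y. x \<in> dg nu \<Longrightarrow> y \<in> D \<Longrightarrow> prec y x \<Longrightarrow> y \<in> dg nu"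
      using Bid prec_le unfolding idealin_def by blast
    show "inj_on \<rho> (D - dg nu)" using rho_inj by (rule inj_on_subset) auto
    show "\<rho> ` (D - dg nu) = dg (cmp nu)" using cp by simp
    show "\<And>x y. x \<in> D - dg nu \<Longrightarrow> y \<in> D - dg nu \<Longrightarrow> prec x y \<longleftrightarrow> prec (\<rho> y) (\<rho> x)"
      using rho_prec by blast
  qed
  interpret s: split_setup D "dg mu" "dg nu" "dg (cmp nu)" "(i, j)" "(i, j + 1)" \<rho> by (rule ss)
  have "bij_betw fst {h \<in> Hset D. gfun h = (mu, nu)} s.Xset"
  proof (rule bij_betw_byWitness[where f' = "\<lambda>T. (T, Suc s.k)"])
    show "\<forall>h\<in>{h \<in> Hset D. gfun h = (mu, nu)}. (fst h, Suc s.k) = h"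
    proof
      fix h assume "h \<in> {h \<in> Hset D. gfun h = (mu, nu)}"
      then have h: "h \<in> Hset D" "gfun h = (mu, nu)" by auto
      obtain T a where ha: "h = (T, a)" by (cases h)
      note hp = H_props[OF h(1)[unfolded ha]]
      have "(THE mu. ispart mu \<and> dg mu = lev T (a - 1)) = mu" using h(2) by (simp add: gfun_def ha)
      then have "dg mu = lev T (a - 1)" using the_part[OF lev_ideal[OF hp(1)]] by metis
      then have "card (dg mu) = a - 1" using lev_card[OF hp(1), of "a - 1"] hp(3) by simp
      then have "s.k = a - 1" unfolding s.k_def .
      then show "(fst h, Suc s.k) = h" using hp(2) by (simp add: ha)
    qed
    show "\<forall>T\<in>s.Xset. fst (T, Suc s.k) = T" by simp
    show "fst ` {h \<in> Hset D. gfun h = (mu, nu)} \<subseteq> s.Xset"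
    proof
      fix T assume "T \<in> fst ` {h \<in> Hset D. gfun h = (mu, nu)}"
      then obtain a where h: "(T, a) \<in> Hset D" "gfun (T, a) = (mu, nu)" by force
      note hp = H_props[OF h(1)]
      have e1: "(THE mu. ispart mu \<and> dg mu = lev T (a - 1)) = mu"
        and e2: "(THE nu. ispart nu \<and> dg nu = lev T (Suc a)) = nu" using h(2) by (simp_all add: gfun_def)
      have A: "dg mu = lev T (a - 1)" using e1 the_part[OF lev_ideal[OF hp(1)]] by metis
      have B: "dg nu = lev T (Suc a)" using e2 the_part[OF lev_ideal[OF hp(1)]] by metis
      have "card (dg mu) = a - 1" using A lev_card[OF hp(1), of "a - 1"] hp(3) by simp
      then have k: "s.k = a - 1" unfolding s.k_def .
      have "Suc (Suc s.k) = Suc a" using k hp(2) by simp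
      then show "T \<in> s.Xset" unfolding s.Xset_def using hp(1) A B k by (simp add: lev_def)
    qed
    show "(\<lambda>T. (T, Suc s.k)) ` s.Xset \<subseteq> {h \<in> Hset D. gfun h = (mu, nu)}"
    proof
      fix h assume "h \<in> (\<lambda>T. (T, Suc s.k)) ` s.Xset"
      then obtain T where T: "T \<in> s.Xset" and hT: "h = (T, Suc s.k)" by blast
      have all: "T \<in> stdT D \<and> {x \<in> D. T x \<le> s.k} = dg mu \<and> {x \<in> D. T x \<le> Suc (Suc s.k)} = dg nu"
        using T unfolding s.Xset_def by (rule CollectD)
      then have std: "T \<in> stdT D" and A: "lev T s.k = dg mu" and B: "lev T (Suc (Suc s.k)) = dg nu"
        by (auto simp: lev_def)
      note v = s.X_vals[OF T]
      have uD: "(i, j) \<in> D" "(i, j + 1) \<in> D" using ij pm(4) by auto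
      have c1: "cellof D T (Suc s.k) = (i, j)" using cellof_eq[OF std uD(1)] v(1) by simp
      have c2: "cellof D T (Suc (Suc s.k)) = (i, j + 1)" using cellof_eq[OF std uD(2)] v(2) by simp
      have kN: "Suc (Suc s.k) \<le> card D" using s.kN by (simp add: s.N_def)
      have inH: "(T, Suc s.k) \<in> Hset D" using std kN c1 c2 by (simp add: Hset_def)
      have "gfun (T, Suc s.k) = (mu, nu)"
        using the_part_eq[OF pm(1) A[symmetric]] the_part_eq[OF pm(2) B[symmetric]]
        by (simp add: gfun_def)
      then show "h \<in> {h \<in> Hset D. gfun h = (mu, nu)}" using inH hT by simp
    qed
  qed
  then have "card {h \<in> Hset D. gfun h = (mu, nu)} = card s.Xset" by (rule bij_betw_same_card)
  then show ?thesis using s.split_card by simp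
qed

lemma finite_H: "finite (Hset D)"
proof -
  have sub: "Hset D \<subseteq> stdT D \<times> {..<card D}" by (auto simp: Hset_def)
  show ?thesis by (rule finite_subset[OF sub]) (simp add: finite_stdT[OF fin])
qed

theorem gen_sum:
  "(\<Sum>(mu, nu)\<in>pairsG. card (stdT (dg mu)) * card (stdT (dg (cmp nu)))) = card (Hset D)"
proof -
  have "card (Hset D) = (\<Sum>h\<in>Hset D. (1::nat))" by simp
  also have "\<dots> = (\<Sum>p\<in>pairsG. \<Sum>h\<in>{h \<in> Hset D. gfun h = p}. (1::nat))"
    by (rule sum.group[symmetric]) (use finite_H finite_pairsG gfun_in in auto)
  also have "\<dots> = (\<Sum>p\<in>pairsG. card {h \<in> Hset D. gfun h = p})" by simp
  also have "\<dots> = (\<Sum>(mu, nu)\<in>pairsG. card (stdT (dg mu)) * card (stdT (dg (cmp nu))))"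
    by (rule sum.cong) (auto simp: fiber_card)
  finally show ?thesis by simp
qed

theorem gen_sum':
  "(\<Sum>(mu, nu)\<in>{(mu, nu). ispart mu \<and> ispart nu \<and> dg mu \<subseteq> dg nu \<and> dg nu \<subseteq> D \<and>
      (\<exists>i j. (i, j) \<in> D - dg mu \<and> dg nu = dg mu \<union> {(i, j), (i, j + 1)})}.
     card (stdT (dg mu)) * card (stdT (dg (cmp nu)))) = card (Hset D)"
  using gen_sum unfolding pairsG_def .

end


lemma finite_diagram: "finite (diagram la)"
proof -
  have "diagram la \<subseteq> {0..length la} \<times> {0..sum_list la}"
  proof
    fix x :: "nat \<times> nat" assume "x \<in> diagram la"
    then obtain i j where x: "x = (i, j)" "1 \<le> i" "i \<le> length la" "1 \<le> j" "j \<le> la ! (i - 1)"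
      by (cases x) (auto simp: diagram_mem)
    moreover have "la ! (i - 1) \<le> sum_list la" using elem_le_sum_list[of "i - 1" la] x by simp
    ultimately show "x \<in> {0..length la} \<times> {0..sum_list la}" by auto
  qed
  then show ?thesis by (rule finite_subset) simp
qed

lemma finite_sdiagram: "finite (shifted_diagram la)"
proof -
  have "shifted_diagram la \<subseteq> {0..length la} \<times> {0..sum_list la + length la}"
  proof
    fix x :: "nat \<times> nat" assume "x \<in> shifted_diagram la"
    then obtain i j where x: "x = (i, j)" "i \<le> j" "(i, Suc j - i) \<in> diagram la"
      by (cases x) (auto simp: sdiag_mem)
    then have "1 \<le> i" "i \<le> length la" "Suc j - i \<le> la ! (i - 1)" by (auto simp: diagram_mem)
    moreover have "la ! (i - 1) \<le> sum_list la" using elem_le_sum_list[of "i - 1" la] \<open>1 \<le> i\<close> \<open>i \<le> length la\<close> by simp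
    ultimately show "x \<in> {0..length la} \<times> {0..sum_list la + length la}" using x by auto
  qed
  then show ?thesis by (rule finite_subset) simp
qed

lemma f_syt_eq: "f_syt la = card (stdT (diagram la))"
  by (simp add: f_syt_def num_std_eq finite_diagram)

lemma g_syt_eq: "g_syt la = card (stdT (shifted_diagram la))"
  by (simp add: g_syt_def num_std_eq finite_sdiagram)

lemma rect_diag: "diagram (rect m n) = {(i, j). 1 \<le> i \<and> i \<le> m \<and> 1 \<le> j \<and> j \<le> n}"
  by (auto simp: diagram_def rect_def)

theorem rect_thm:
  assumes m: "1 \<le> m" and n: "1 \<le> n"
  shows "(\<Sum>(mu, nu) \<in> pairs_rect m n. f_syt mu * f_syt (rect_compl m n nu)) = (n - 1) * f_syt (rect m n)"
proof -
  define D where "D = diagram (rect m n)"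
  define \<rho> where "\<rho> = (\<lambda>(i::nat, j::nat). (m - i + 1, n - j + 1))"
  have memD: "x \<in> D \<longleftrightarrow> 1 \<le> fst x \<and> fst x \<le> m \<and> 1 \<le> snd x \<and> snd x \<le> n" for x
    by (cases x) (simp add: D_def rect_diag)
  have finD: "finite D" by (simp add: D_def finite_diagram)
  have cs: "convex_shape D"
    by (rule convex_shape.intro) (use finD memD in auto)
  have gg: "gen D is_partition diagram \<rho> (rect_compl m n)"
  proof (rule gen.intro[OF cs], rule gen_axioms.intro)
    show "\<And>mu nu. is_partition mu \<Longrightarrow> is_partition nu \<Longrightarrow> diagram mu = diagram nu \<Longrightarrow> mu = nu"
      by (rule part_inj)
    show "\<exists>mu. is_partition mu \<and> diagram mu = S" if S: "idealin D S" for S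
    proof (rule part_ex)
      have SD: "S \<subseteq> D" using S by (simp add: idealin_def)
      show "finite S" using finD SD by (rule finite_subset[rotated])
      show "\<And>i j. (i, j) \<in> S \<Longrightarrow> 1 \<le> i \<and> 1 \<le> j" using SD memD by force
      show "\<And>i j i' j'. (i, j) \<in> S \<Longrightarrow> 1 \<le> i' \<Longrightarrow> i' \<le> i \<Longrightarrow> 1 \<le> j' \<Longrightarrow> j' \<le> j \<Longrightarrow> (i', j') \<in> S"
      proof -
        fix i j i' j' assume a: "(i, j) \<in> S" "1 \<le> i'" "i' \<le> i" "1 \<le> j'" "j' \<le> j"
        then have "(i, j) \<in> D" using SD by blast
        then have "(i', j') \<in> D" using a memD by auto
        then show "(i', j') \<in> S" using S a unfolding idealin_def by fastforce
      qed
    qed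
    show "idealin D (diagram mu)" if "is_partition mu" "diagram mu \<subseteq> D" for mu
      unfolding idealin_def using that
      by (auto intro: part_down[OF that(1)] simp: memD)
    show "\<And>x y. x \<in> D \<Longrightarrow> y \<in> D \<Longrightarrow> fst y \<le> fst x \<Longrightarrow> snd y \<le> snd x \<Longrightarrow> (fst y, snd x) \<in> D"
      using memD by auto
    show "\<And>x. x \<in> D \<Longrightarrow> \<rho> x \<in> D" using memD by (auto simp: \<rho>_def split: prod.splits)
    show "\<And>x. x \<in> D \<Longrightarrow> \<rho> (\<rho> x) = x" using memD by (auto simp: \<rho>_def split: prod.splits)
    show "\<And>x y. x \<in> D \<Longrightarrow> y \<in> D \<Longrightarrow> fst y \<le> fst x \<Longrightarrow> snd y \<le> snd x \<Longrightarrow>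
        fst (\<rho> x) \<le> fst (\<rho> y) \<and> snd (\<rho> x) \<le> snd (\<rho> y)" using memD by (auto simp: \<rho>_def split: prod.splits)
    show "\<And>x y. x \<in> D \<Longrightarrow> y \<in> D \<Longrightarrow> prec x y \<longleftrightarrow> prec (\<rho> y) (\<rho> x)"
      using memD by (auto simp: \<rho>_def prec_def split: prod.splits)
    show "\<And>nu. rect_compl m n nu = (THE la. is_partition la \<and> diagram la = \<rho> ` (D - diagram nu))"
      by (simp add: rect_compl_def D_def \<rho>_def)
  qed
  interpret g: gen D is_partition diagram \<rho> "rect_compl m n" by (rule gg)
  have "(\<Sum>(mu, nu) \<in> pairs_rect m n. f_syt mu * f_syt (rect_compl m n nu)) = card (Hset D)"
    using g.gen_sum' unfolding pairs_rect_def D_def f_syt_eq .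
  moreover have "int (card (Hset D)) = int (card (stdT D) * (n - 1))"
  proof -
    have ne: "D \<noteq> {}" using memD[of "(1, 1)"] m n by auto
    have c1: "snd (cellof D T (card D)) = n" and c2: "snd (cellof D T 1) = 1" if T: "T \<in> stdT D" for T
    proof -
      have N1: "1 \<le> card D" using ne finD by (simp add: Suc_le_eq card_gt_0_iff)
      obtain x where x: "x \<in> D" "T x = card D" "cellof D T (card D) = x"
        using cellof[OF finD T, of "card D"] N1 by auto
      show "snd (cellof D T (card D)) = n"
      proof (rule ccontr)
        assume "snd (cellof D T (card D)) \<noteq> n"
        then have "snd x < n" using x memD by fastforce
        then have y: "(fst x, Suc (snd x)) \<in> D" using x memD by auto
        have "prec x (fst x, Suc (snd x))" by (simp add: prec_def)
        then have "T x < T (fst x, Suc (snd x))" using stdT_mono[OF T x(1) y] by simp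
        then show False using stdT_range[OF T y] x by simp
      qed
      obtain z where z: "z \<in> D" "T z = 1" "cellof D T 1 = z"
        using cellof[OF finD T, of 1] N1 by auto
      show "snd (cellof D T 1) = 1"
      proof (rule ccontr)
        assume "snd (cellof D T 1) \<noteq> 1"
        then have "1 < snd z" using z memD by fastforce
        then have y: "(fst z, snd z - 1) \<in> D" using z memD by auto
        have "prec (fst z, snd z - 1) z" using \<open>1 < snd z\<close> by (simp add: prec_def)
        then have "T (fst z, snd z - 1) < T z" using stdT_mono[OF T y z(1)] by simp
        then show False using stdT_range[OF T y] z by simp
      qed
    qed

    have "int (card (Hset D)) = (\<Sum>T\<in>stdT D. int (snd (cellof D T (card D))) - int (snd (cellof D T 1)))"
      by (rule g.partA[OF ne])
    also have "\<dots> = (\<Sum>T\<in>stdT D. int n - 1)" 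
    proof (rule sum.cong[OF refl])
      fix T assume T: "T \<in> stdT D"
      show "int (snd (cellof D T (card D))) - int (snd (cellof D T 1)) = int n - 1"
        using c1[OF T] c2[OF T] by simp
    qed
    also have "\<dots> = int (card (stdT D) * (n - 1))" using n by (simp add: of_nat_diff)
    finally show ?thesis .
  qed
  then have "card (Hset D) = card (stdT D) * (n - 1)" by (simp only: of_nat_eq_iff)
  ultimately show ?thesis unfolding f_syt_eq D_def by (simp only: mult.commute)
qed


lemma stair_len: "length (staircase n) = n - 1"
  by (simp add: staircase_def)

lemma stair_nth: "1 \<le> i \<Longrightarrow> i \<le> n - 1 \<Longrightarrow> staircase n ! (i - 1) = n - i"
  by (simp add: staircase_def rev_nth)

lemma stair_mem: "(i, j) \<in> shifted_diagram (staircase n) \<longleftrightarrow> 1 \<le> i \<and> i \<le> j \<and> j \<le> n - 1"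
proof
  assume "(i, j) \<in> shifted_diagram (staircase n)"
  then have h: "i \<le> j" "1 \<le> i" "i \<le> n - 1" "Suc j - i \<le> staircase n ! (i - 1)"
    by (auto simp: sdiag_mem diagram_mem stair_len)
  then show "1 \<le> i \<and> i \<le> j \<and> j \<le> n - 1" using stair_nth[of i n] by simp
next
  assume h: "1 \<le> i \<and> i \<le> j \<and> j \<le> n - 1"
  then show "(i, j) \<in> shifted_diagram (staircase n)"
    using stair_nth[of i n] by (auto simp: sdiag_mem diagram_mem stair_len)
qed

theorem stair_thm:
  assumes n: "2 \<le> n"
  shows "(\<Sum>(mu, nu) \<in> pairs_stair n. g_syt mu * g_syt (stair_compl n nu)) = (n - 2) * g_syt (staircase n)"
proof -
  define D where "D = shifted_diagram (staircase n)"
  define \<rho> where "\<rho> = (\<lambda>(i::nat, j::nat). (n - j, n - i))"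
  have memD: "x \<in> D \<longleftrightarrow> 1 \<le> fst x \<and> fst x \<le> snd x \<and> snd x \<le> n - 1" for x
    by (cases x) (simp add: D_def stair_mem)
  have finD: "finite D" by (simp add: D_def finite_sdiagram)
  have cs: "convex_shape D"
    by (rule convex_shape.intro) (use finD memD in auto)
  have gg: "gen D is_strict_partition shifted_diagram \<rho> (stair_compl n)"
  proof (rule gen.intro[OF cs], rule gen_axioms.intro)
    show "\<And>mu nu. is_strict_partition mu \<Longrightarrow> is_strict_partition nu \<Longrightarrow> shifted_diagram mu = shifted_diagram nu \<Longrightarrow> mu = nu"
      by (rule spart_inj)
    show "\<exists>mu. is_strict_partition mu \<and> shifted_diagram mu = S" if S: "idealin D S" for S
    proof (rule spart_ex)
      have SD: "S \<subseteq> D" using S by (simp add: idealin_def)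
      show "finite S" using finD SD by (rule finite_subset[rotated])
      show "\<And>i j. (i, j) \<in> S \<Longrightarrow> 1 \<le> i \<and> i \<le> j" using SD memD by force
      show "\<And>i j i' j'. (i, j) \<in> S \<Longrightarrow> 1 \<le> i' \<Longrightarrow> i' \<le> i \<Longrightarrow> i' \<le> j' \<Longrightarrow> j' \<le> j \<Longrightarrow> (i', j') \<in> S"
      proof -
        fix i j i' j' assume a: "(i, j) \<in> S" "1 \<le> i'" "i' \<le> i" "i' \<le> j'" "j' \<le> j"
        then have "(i, j) \<in> D" using SD by blast
        then have "(i', j') \<in> D" using a memD by auto
        then show "(i', j') \<in> S" using S a unfolding idealin_def by fastforce
      qed
    qed
    show "idealin D (shifted_diagram mu)" if "is_strict_partition mu" "shifted_diagram mu \<subseteq> D" for mu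
      unfolding idealin_def using that
      by (auto intro: spart_down[OF that(1)] simp: memD)
    show "\<And>x y. x \<in> D \<Longrightarrow> y \<in> D \<Longrightarrow> fst y \<le> fst x \<Longrightarrow> snd y \<le> snd x \<Longrightarrow> (fst y, snd x) \<in> D"
      using memD by auto
    show "\<And>x. x \<in> D \<Longrightarrow> \<rho> x \<in> D" using memD by (auto simp: \<rho>_def split: prod.splits)
    show "\<And>x. x \<in> D \<Longrightarrow> \<rho> (\<rho> x) = x" using memD by (auto simp: \<rho>_def split: prod.splits)
    show "\<And>x y. x \<in> D \<Longrightarrow> y \<in> D \<Longrightarrow> fst y \<le> fst x \<Longrightarrow> snd y \<le> snd x \<Longrightarrow>
        fst (\<rho> x) \<le> fst (\<rho> y) \<and> snd (\<rho> x) \<le> snd (\<rho> y)" using memD by (auto simp: \<rho>_def split: prod.splits)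
    show "\<And>x y. x \<in> D \<Longrightarrow> y \<in> D \<Longrightarrow> prec x y \<longleftrightarrow> prec (\<rho> y) (\<rho> x)"
      using memD by (auto simp: \<rho>_def prec_def split: prod.splits)
    show "\<And>nu. stair_compl n nu = (THE la. is_strict_partition la \<and> shifted_diagram la = \<rho> ` (D - shifted_diagram nu))"
      by (simp add: stair_compl_def D_def \<rho>_def)
  qed
  interpret g: gen D is_strict_partition shifted_diagram \<rho> "stair_compl n" by (rule gg)
  have "(\<Sum>(mu, nu) \<in> pairs_stair n. g_syt mu * g_syt (stair_compl n nu)) = card (Hset D)"
    using g.gen_sum' unfolding pairs_stair_def D_def g_syt_eq .
  moreover have "int (card (Hset D)) = int (card (stdT D) * (n - 2))"
  proof -
    have ne: "D \<noteq> {}" using memD[of "(1, 1)"] n by auto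
    have c1: "snd (cellof D T (card D)) = n - 1" and c2: "snd (cellof D T 1) = 1" if T: "T \<in> stdT D" for T
    proof -
      have N1: "1 \<le> card D" using ne finD by (simp add: Suc_le_eq card_gt_0_iff)
      obtain x where x: "x \<in> D" "T x = card D" "cellof D T (card D) = x"
        using cellof[OF finD T, of "card D"] N1 by auto
      show "snd (cellof D T (card D)) = n - 1"
      proof (rule ccontr)
        assume "snd (cellof D T (card D)) \<noteq> n - 1"
        then have "snd x < n - 1" using x memD by fastforce
        then have y: "(fst x, Suc (snd x)) \<in> D" using x memD by auto
        have "prec x (fst x, Suc (snd x))" by (simp add: prec_def)
        then have "T x < T (fst x, Suc (snd x))" using stdT_mono[OF T x(1) y] by simp
        then show False using stdT_range[OF T y] x by simp
      qed
      obtain z where z: "z \<in> D" "T z = 1" "cellof D T 1 = z"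
        using cellof[OF finD T, of 1] N1 by auto
      show "snd (cellof D T 1) = 1"
      proof (rule ccontr)
        assume "snd (cellof D T 1) \<noteq> 1"
        then have gt: "1 < snd z" using z memD by fastforce
        obtain y where y: "y \<in> D" "prec y z"
        proof (cases "fst z < snd z")
          case True
          then have "(fst z, snd z - 1) \<in> D" using z memD by auto
          moreover have "prec (fst z, snd z - 1) z" using gt by (simp add: prec_def)
          ultimately show ?thesis using that by blast
        next
          case False
          then have "(fst z - 1, snd z) \<in> D" using z memD gt by auto
          moreover have "prec (fst z - 1, snd z) z" using gt False z memD by (simp add: prec_def)
          ultimately show ?thesis using that by blast
        qed
        then have "T y < T z" using stdT_mono[OF T y(1) z(1)] by simp
        then show False using stdT_range[OF T y(1)] z by simp
      qed
    qed
    have "int (card (Hset D)) = (\<Sum>T\<in>stdT D. int (snd (cellof D T (card D))) - int (snd (cellof D T 1)))"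
      by (rule g.partA[OF ne])
    also have "\<dots> = (\<Sum>T\<in>stdT D. int (n - 1) - 1)"
    proof (rule sum.cong[OF refl])
      fix T assume T: "T \<in> stdT D"
      show "int (snd (cellof D T (card D))) - int (snd (cellof D T 1)) = int (n - 1) - 1"
        using c1[OF T] c2[OF T] by simp
    qed
    also have "\<dots> = int (card (stdT D) * (n - 2))" using n by (simp add: of_nat_diff)
    finally show ?thesis .
  qed
  then have "card (Hset D) = card (stdT D) * (n - 2)" by (simp only: of_nat_eq_iff)
  ultimately show ?thesis unfolding g_syt_eq D_def by (simp only: mult.commute)
qed

theorem mainTheorem16:
  shows "(\<forall>m n :: nat. 1 \<le> m \<longrightarrow> 1 \<le> n \<longrightarrow>
            (\<Sum>(mu, nu) \<in> pairs_rect m n. f_syt mu * f_syt (rect_compl m n nu))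
              = (n - 1) * f_syt (rect m n))
       \<and> (\<forall>n :: nat. 2 \<le> n \<longrightarrow>
            (\<Sum>(mu, nu) \<in> pairs_stair n. g_syt mu * g_syt (stair_compl n nu))
              = (n - 2) * g_syt (staircase n))"
  using rect_thm stair_thm by blast


end
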